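(* Let $V=\operatorname{span}(x_1,\dots,x_7)$, let $R=\operatorname{span}(r_1,\dots,r_7)\subset V\otimes V$, and let $W=\sum_{i,j,l}\varepsilon^{ijl}x_i\otimes x_j\otimes x_l\in V^{\otimes3}$. (1) The linear map $V^*\otimes V^*\to V$, $\lambda\otimes\mu\mapsto\sum_{i,j,l}\varepsilon^{ijl}x_i\lambda(x_j)\mu(x_l)$, determined by $W$ has rank $7$. (2) If $\mathbb{O}_k$ is a division algebra (for example $k=\mathbb{R}$), every nonzero element of $R$ has rank $6$. (3) If $k$ is algebraically closed of characteristic $\ne2$, every nonzero element of $R$ has rank $\ge4$, and rank exactly $4$ occurs.
   Context: Let $k$ be a field of characteristic $\ne 2$. Label the points of the Fano plane by $1,\dots,7$ so that its directed lines are $123,145,167,246,275,374,365$; for $i,j,l$ put $\varepsilon^{ijl}=1$ if $(i,j,l)$ is a cyclic rotation of a directed line, $-1$ if $(j,i,l)$ is, and $0$ otherwise. $r_i=\sum_{m,n}\varepsilon^{imn}x_m\otimes x_n$ are the defining relations of $A_k=T(V)/(R)$. The rank of an element of $V\otimes V$ is its rank as a $7\times7$ matrix of coefficients. $\mathbb{O}_k$ is the octonion algebra with basis $1,o_1,\dots,o_7$ and $o_ro_s=\sum_i\varepsilon^{rsi}o_i-\delta_{rs}$. *)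

theory Defs
  imports "HOL-Analysis.Analysis" "HOL-Computational_Algebra.Polynomial"
begin

text \<open>Points of the Fano plane are the elements of the type 7 written as numerals
  1,...,7 (note (7::7) is the seventh point; it equals 0 in the ring structure of the type,
  but is distinct from the numerals 1..6).\<close>

definition fano_lines :: "(7 \<times> 7 \<times> 7) set" where
  "fano_lines = {(1,2,3),(1,4,5),(1,6,7),(2,4,6),(2,7,5),(3,7,4),(3,6,5)}"

definition fano_cyc :: "(7 \<times> 7 \<times> 7) set" where
  "fano_cyc = {(i,j,l). (i,j,l) \<in> fano_lines \<or> (j,l,i) \<in> fano_lines \<or> (l,i,j) \<in> fano_lines}"

definition eps :: "7 \<Rightarrow> 7 \<Rightarrow> 7 \<Rightarrow> 'a::ring_1" where
  "eps i j l = (if (i,j,l) \<in> fano_cyc then 1 else if (j,i,l) \<in> fano_cyc then -1 else 0)"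

text \<open>Elements of V \<otimes> V are 7x7 coefficient matrices: entry m n is the coefficient of x_m \<otimes> x_n.
  r_i has coefficient matrix (eps i m n).\<close>
definition rel :: "7 \<Rightarrow> 'a::field^7^7" where
  "rel i = (\<chi> m n. eps i m n)"

definition R_space :: "('a::field^7^7) set" where
  "R_space = {M. \<exists>c::'a^7. M = (\<chi> m n. \<Sum>i\<in>UNIV. c$i * rel i $ m $ n)}"

text \<open>Matrix of the linear map V*\<otimes>V* \<rightarrow> V, x_j^* \<otimes> x_l^* \<mapsto> \<Sum>_i eps^{ijl} x_i,
  with respect to the bases x_j^* \<otimes> x_l^* (columns indexed by pairs (j,l)) and x_i (rows).\<close>
definition W_map_matrix :: "'a::field^(7\<times>7)^7" where
  "W_map_matrix = (\<chi> i p. eps i (fst p) (snd p))"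

text \<open>Octonions: pairs (a_0, a) standing for a_0 1 + \<Sum>_r a_r o_r, with the multiplication
  obtained by bilinear extension of o_r o_s = \<Sum>_i eps^{rsi} o_i - \<delta>_{rs}.\<close>
definition octo_mult :: "('a::field \<times> ('a^7)) \<Rightarrow> ('a \<times> ('a^7)) \<Rightarrow> ('a \<times> ('a^7))" where
  "octo_mult x y =
     (fst x * fst y - (\<Sum>r\<in>UNIV. snd x $ r * snd y $ r),
      (\<chi> i. fst x * snd y $ i + fst y * snd x $ i
            + (\<Sum>r\<in>UNIV. \<Sum>s\<in>UNIV. eps r s i * snd x $ r * snd y $ s)))"

definition octo_division :: "'a::field itself \<Rightarrow> bool" where
  "octo_division _ = (\<forall>x::('a \<times> ('a^7)). x \<noteq> (0,0) \<longrightarrow>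
       bij (octo_mult x) \<and> bij (\<lambda>y. octo_mult y x))"

end

theory Submission
  imports Defs
begin

lemma exhaust_7:
  fixes x :: 7
  shows "x = 1 \<or> x = 2 \<or> x = 3 \<or> x = 4 \<or> x = 5 \<or> x = 6 \<or> x = 7"
proof (induct x)
  case (of_int z)
  then have "z = 0 \<or> z = 1 \<or> z = 2 \<or> z = 3 \<or> z = 4 \<or> z = 5 \<or> z = 6" by fastforce
  then show ?case by auto
qed
lemma UNIV7: "(UNIV::7 set) = {1,2,3,4,5,6,7}"
  using exhaust_7 by auto
lemma sum7: "sum f (UNIV::7 set) = f 1 + f 2 + f 3 + f 4 + f 5 + f 6 + f 7"
  unfolding UNIV7 by (simp add: add.assoc)

lemma cyc_prop: "(i,j,l) \<in> fano_cyc \<Longrightarrow> (j,i,l) \<notin> fano_cyc \<and> i \<noteq> j \<and> j \<noteq> l \<and> i \<noteq> l"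
  apply (simp only: fano_cyc_def fano_lines_def mem_Collect_eq case_prod_conv insert_iff empty_iff prod.inject)
  apply (elim disjE conjE)
  apply (simp_all add: fano_cyc_def fano_lines_def)
  done

lemma cyc_rot: "(i,j,l) \<in> fano_cyc \<longleftrightarrow> (j,l,i) \<in> fano_cyc"
  by (auto simp: fano_cyc_def)

lemmas eps_simps = eps_def fano_cyc_def fano_lines_def

lemma eps_antisym: "(eps i j l :: 'a::ring_1) = - eps j i l"
  by (auto simp: eps_def dest: cyc_prop)

lemma eps_cyc: "(eps i j l :: 'a::ring_1) = eps j l i"
  unfolding eps_def using cyc_rot[of i j l] cyc_rot[of l j i] by simp

lemma eps_diag: "(eps i m m :: 'a::ring_1) = 0"
  by (auto simp: eps_def dest: cyc_prop)

definition Mc :: "'a::field^7 \<Rightarrow> 'a^7^7" where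
  "Mc c = (\<chi> m n. \<Sum>i\<in>UNIV. c$i * eps i m n)"

lemma R_space_iff: "M \<in> R_space \<longleftrightarrow> (\<exists>c. M = Mc c)"
  by (simp add: R_space_def Mc_def rel_def)

lemma eps_swap23: "(eps i m n :: 'a::ring_1) = - eps i n m"
proof -
  have 1: "(eps i m n :: 'a) = eps m n i" by (rule eps_cyc)
  have 2: "(eps m n i :: 'a) = - eps n m i" by (rule eps_antisym)
  have 3: "(eps i n m :: 'a) = eps n m i" by (rule eps_cyc)
  show ?thesis by (simp only: 1 2 3)
qed

lemma Mc_antisym: "Mc c $ m $ n = - Mc c $ n $ m"
  unfolding Mc_def by (simp add: eps_swap23[of _ n m] sum_negf[symmetric])

lemma Mc_diag: "Mc c $ m $ m = 0"
  unfolding Mc_def by (simp add: eps_diag)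

lemma quad_zero:
  fixes c1 c2 c3 c4 c5 c6 c7 :: "'a::field"
  assumes two: "(2::'a) \<noteq> 0"
    and L123: "c1*c1 + c2*c2 + c3*c3 = 0"
    and L167: "c1*c1 + c6*c6 + c7*c7 = 0"
    and L145: "c1*c1 + c4*c4 + c5*c5 = 0"
    and L246: "c2*c2 + c4*c4 + c6*c6 = 0"
    and L257: "c2*c2 + c5*c5 + c7*c7 = 0"
    and L347: "c3*c3 + c4*c4 + c7*c7 = 0"
    and L356: "c3*c3 + c5*c5 + c6*c6 = 0"
    and m12: "c1*c2 = 0"
  shows "c1 = 0 \<and> c2 = 0 \<and> c3 = 0 \<and> c4 = 0 \<and> c5 = 0 \<and> c6 = 0 \<and> c7 = 0"
proof -
  have e: "2*(c1*c1 - cj*cj) = 0" if "L1 + L2 - L3 - L4 = 2*(c1*c1 - cj*cj)" "L1 = 0" "L2 = 0" "L3 = 0" "L4 = 0"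
    for L1 L2 L3 L4 cj :: 'a using that by simp
  have q2: "c1*c1 = c2*c2" using e[OF _ L145 L167 L246 L257] two by (simp add: algebra_simps)
  have q3: "c1*c1 = c3*c3" using e[OF _ L145 L167 L347 L356] two by (simp add: algebra_simps)
  have q4: "c1*c1 = c4*c4" using e[OF _ L123 L167 L246 L347] two by (simp add: algebra_simps)
  have q5: "c1*c1 = c5*c5" using e[OF _ L123 L167 L257 L356] two by (simp add: algebra_simps)
  have q6: "c1*c1 = c6*c6" using e[OF _ L123 L145 L246 L356] two by (simp add: algebra_simps)
  have q7: "c1*c1 = c7*c7" using e[OF _ L123 L145 L257 L347] two by (simp add: algebra_simps)
  have "(c1*c1)*(c1*c1) = (c1*c2)*(c1*c2)" using q2 by (simp add: algebra_simps)
  then have "c1 = 0" using m12 by simp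
  then show ?thesis using q2 q3 q4 q5 q6 q7 by simp
qed

lemma Mc_ents:
  "Mc c $ 1 $ 2 = c$3"
  "Mc c $ 1 $ 3 = - c$2"
  "Mc c $ 1 $ 4 = c$5"
  "Mc c $ 1 $ 5 = - c$4"
  "Mc c $ 1 $ 6 = c$7"
  "Mc c $ 1 $ 7 = - c$6"
  "Mc c $ 2 $ 1 = - c$3"
  "Mc c $ 2 $ 3 = c$1"
  "Mc c $ 2 $ 4 = c$6"
  "Mc c $ 2 $ 5 = - c$7"
  "Mc c $ 2 $ 6 = - c$4"
  "Mc c $ 2 $ 7 = c$5"
  "Mc c $ 3 $ 1 = c$2"
  "Mc c $ 3 $ 2 = - c$1"
  "Mc c $ 3 $ 4 = - c$7"
  "Mc c $ 3 $ 5 = - c$6"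
  "Mc c $ 3 $ 6 = c$5"
  "Mc c $ 3 $ 7 = c$4"
  "Mc c $ 4 $ 1 = - c$5"
  "Mc c $ 4 $ 2 = - c$6"
  "Mc c $ 4 $ 3 = c$7"
  "Mc c $ 4 $ 5 = c$1"
  "Mc c $ 4 $ 6 = c$2"
  "Mc c $ 4 $ 7 = - c$3"
  "Mc c $ 5 $ 1 = c$4"
  "Mc c $ 5 $ 2 = c$7"
  "Mc c $ 5 $ 3 = c$6"
  "Mc c $ 5 $ 4 = - c$1"
  "Mc c $ 5 $ 6 = - c$3"
  "Mc c $ 5 $ 7 = - c$2"
  "Mc c $ 6 $ 1 = - c$7"
  "Mc c $ 6 $ 2 = c$4"
  "Mc c $ 6 $ 3 = - c$5"
  "Mc c $ 6 $ 4 = - c$2"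
  "Mc c $ 6 $ 5 = c$3"
  "Mc c $ 6 $ 7 = c$1"
  "Mc c $ 7 $ 1 = c$6"
  "Mc c $ 7 $ 2 = - c$5"
  "Mc c $ 7 $ 3 = - c$4"
  "Mc c $ 7 $ 4 = c$3"
  "Mc c $ 7 $ 5 = c$2"
  "Mc c $ 7 $ 6 = - c$1"
  by (simp_all add: Mc_def sum7 eps_simps)

lemma pf_nonzero:
  fixes c :: "'a::field^7"
  assumes two: "(2::'a) \<noteq> 0" and c: "c \<noteq> 0"
  shows "\<exists>a b d e. distinct [a,b,d,e] \<and>
     Mc c$a$b * Mc c$d$e - Mc c$a$d * Mc c$b$e + Mc c$a$e * Mc c$b$d \<noteq> 0"
proof (rule ccontr)
  assume "\<not> ?thesis"
  then have h: "\<And>a b d e. distinct [a,b,d,e] \<Longrightarrow>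
     Mc c$a$b * Mc c$d$e - Mc c$a$d * Mc c$b$e + Mc c$a$e * Mc c$b$d = 0" by blast
  have "distinct [4,5,6,7::7]" by simp
  from h[OF this] have "Mc c$4$5 * Mc c$6$7 - Mc c$4$6 * Mc c$5$7 + Mc c$4$7 * Mc c$5$6 = 0" .
  moreover have "c$1*c$1 + c$2*c$2 + c$3*c$3 = (Mc c$4$5 * Mc c$6$7 - Mc c$4$6 * Mc c$5$7 + Mc c$4$7 * Mc c$5$6)" unfolding Mc_ents by algebra
  ultimately have L123: "c$1*c$1 + c$2*c$2 + c$3*c$3 = 0" by simp
  have "distinct [2,3,4,5::7]" by simp
  from h[OF this] have "Mc c$2$3 * Mc c$4$5 - Mc c$2$4 * Mc c$3$5 + Mc c$2$5 * Mc c$3$4 = 0" .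
  moreover have "c$1*c$1 + c$6*c$6 + c$7*c$7 = (Mc c$2$3 * Mc c$4$5 - Mc c$2$4 * Mc c$3$5 + Mc c$2$5 * Mc c$3$4)" unfolding Mc_ents by algebra
  ultimately have L167: "c$1*c$1 + c$6*c$6 + c$7*c$7 = 0" by simp
  have "distinct [2,3,6,7::7]" by simp
  from h[OF this] have "Mc c$2$3 * Mc c$6$7 - Mc c$2$6 * Mc c$3$7 + Mc c$2$7 * Mc c$3$6 = 0" .
  moreover have "c$1*c$1 + c$4*c$4 + c$5*c$5 = (Mc c$2$3 * Mc c$6$7 - Mc c$2$6 * Mc c$3$7 + Mc c$2$7 * Mc c$3$6)" unfolding Mc_ents by algebra
  ultimately have L145: "c$1*c$1 + c$4*c$4 + c$5*c$5 = 0" by simp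
  have "distinct [1,3,5,7::7]" by simp
  from h[OF this] have "Mc c$1$3 * Mc c$5$7 - Mc c$1$5 * Mc c$3$7 + Mc c$1$7 * Mc c$3$5 = 0" .
  moreover have "c$2*c$2 + c$4*c$4 + c$6*c$6 = (Mc c$1$3 * Mc c$5$7 - Mc c$1$5 * Mc c$3$7 + Mc c$1$7 * Mc c$3$5)" unfolding Mc_ents by algebra
  ultimately have L246: "c$2*c$2 + c$4*c$4 + c$6*c$6 = 0" by simp
  have "distinct [1,3,4,6::7]" by simp
  from h[OF this] have "Mc c$1$3 * Mc c$4$6 - Mc c$1$4 * Mc c$3$6 + Mc c$1$6 * Mc c$3$4 = 0" .
  moreover have "c$2*c$2 + c$5*c$5 + c$7*c$7 = - (Mc c$1$3 * Mc c$4$6 - Mc c$1$4 * Mc c$3$6 + Mc c$1$6 * Mc c$3$4)" unfolding Mc_ents by algebra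
  ultimately have L257: "c$2*c$2 + c$5*c$5 + c$7*c$7 = 0" by simp
  have "distinct [1,2,5,6::7]" by simp
  from h[OF this] have "Mc c$1$2 * Mc c$5$6 - Mc c$1$5 * Mc c$2$6 + Mc c$1$6 * Mc c$2$5 = 0" .
  moreover have "c$3*c$3 + c$4*c$4 + c$7*c$7 = - (Mc c$1$2 * Mc c$5$6 - Mc c$1$5 * Mc c$2$6 + Mc c$1$6 * Mc c$2$5)" unfolding Mc_ents by algebra
  ultimately have L347: "c$3*c$3 + c$4*c$4 + c$7*c$7 = 0" by simp
  have "distinct [1,2,4,7::7]" by simp
  from h[OF this] have "Mc c$1$2 * Mc c$4$7 - Mc c$1$4 * Mc c$2$7 + Mc c$1$7 * Mc c$2$4 = 0" .
  moreover have "c$3*c$3 + c$5*c$5 + c$6*c$6 = - (Mc c$1$2 * Mc c$4$7 - Mc c$1$4 * Mc c$2$7 + Mc c$1$7 * Mc c$2$4)" unfolding Mc_ents by algebra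
  ultimately have L356: "c$3*c$3 + c$5*c$5 + c$6*c$6 = 0" by simp
  have "distinct [1,3,4,5::7]" by simp
  from h[OF this] have "Mc c$1$3 * Mc c$4$5 - Mc c$1$4 * Mc c$3$5 + Mc c$1$5 * Mc c$3$4 = 0" .
  moreover have "- (c$1*c$2) + c$5*c$6 + c$4*c$7 = (Mc c$1$3 * Mc c$4$5 - Mc c$1$4 * Mc c$3$5 + Mc c$1$5 * Mc c$3$4)" unfolding Mc_ents by algebra
  ultimately have P1: "- (c$1*c$2) + c$5*c$6 + c$4*c$7 = 0" by simp
  have "distinct [1,3,6,7::7]" by simp
  from h[OF this] have "Mc c$1$3 * Mc c$6$7 - Mc c$1$6 * Mc c$3$7 + Mc c$1$7 * Mc c$3$6 = 0" .
  moreover have "- (c$1*c$2) - c$4*c$7 - c$5*c$6 = (Mc c$1$3 * Mc c$6$7 - Mc c$1$6 * Mc c$3$7 + Mc c$1$7 * Mc c$3$6)" unfolding Mc_ents by algebra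
  ultimately have P2: "- (c$1*c$2) - c$4*c$7 - c$5*c$6 = 0" by simp
  have "2 * (c$1*c$2) = 0" using P1 P2 by (simp add: algebra_simps)
  then have m12: "c$1*c$2 = 0" using two by simp
  have "c$1 = 0 \<and> c$2 = 0 \<and> c$3 = 0 \<and> c$4 = 0 \<and> c$5 = 0 \<and> c$6 = 0 \<and> c$7 = 0"
    by (rule quad_zero[OF two L123 L167 L145 L246 L257 L347 L356 m12])
  then have "c$i = 0" for i using exhaust_7[of i] by (elim disjE) simp_all
  then have "c = 0" by (simp add: vec_eq_iff)
  with c show False by simp
qed
lemma rank_ge_family:
  fixes M :: "'a::field^'n^'m" and J :: "'m set"
  assumes indep: "\<And>lam. (\<Sum>j\<in>J. lam j *s row j M) = 0 \<Longrightarrow> \<forall>j\<in>J. lam j = 0"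
  shows "card J \<le> rank M"
proof -
  have fin: "finite J" by simp
  have inj: "inj_on (\<lambda>j. row j M) J"
  proof (rule inj_onI)
    fix a b assume ab: "a \<in> J" "b \<in> J" "row a M = row b M"
    show "a = b"
    proof (rule ccontr)
      assume ne: "a \<noteq> b"
      define lam where "lam = (\<lambda>j. if j = a then (1::'a) else if j = b then -1 else 0)"
      have "(\<Sum>j\<in>J. lam j *s row j M) = (\<Sum>j\<in>J. (if j = a then row a M else 0) + (if j = b then - row b M else 0))"
        by (rule sum.cong) (auto simp: lam_def ne)
      also have "\<dots> = row a M - row b M"
        using ab fin by (simp add: sum.distrib)
      also have "\<dots> = 0" using ab by simp
      finally have "\<forall>j\<in>J. lam j = 0" by (rule indep)
      then show False using ab by (auto simp: lam_def)
    qed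
  qed
  define S where "S = (\<lambda>j. row j M) ` J"
  have nd: "\<not> (\<exists>u. (\<exists>v\<in>S. u v \<noteq> 0) \<and> (\<Sum>v\<in>S. u v *s v) = 0)"
  proof
    assume "\<exists>u. (\<exists>v\<in>S. u v \<noteq> 0) \<and> (\<Sum>v\<in>S. u v *s v) = 0"
    then obtain u where u1: "\<exists>v\<in>S. u v \<noteq> 0" and u2: "(\<Sum>v\<in>S. u v *s v) = 0"
      by blast
    have "(\<Sum>v\<in>S. u v *s v) = (\<Sum>j\<in>J. u (row j M) *s row j M)"
      unfolding S_def using sum.reindex[OF inj, of "\<lambda>v. u v *s v"] by (simp add: o_def)
    with u2 have "(\<Sum>j\<in>J. u (row j M) *s row j M) = 0" by simp
    then have "\<forall>j\<in>J. u (row j M) = 0" by (rule indep)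
    then show False using u1 unfolding S_def by blast
  qed
  have ind: "vec.independent S"
    using nd vec.dependent_finite[of S] fin unfolding S_def by blast
  have sub: "S \<subseteq> rows M" unfolding S_def by (auto simp: rows_def)
  have "card J = card S" unfolding S_def using card_image[OF inj] by simp
  also have "\<dots> \<le> vec.dim (rows M)" by (rule vec.independent_card_le_dim[OF sub ind])
  finally show ?thesis by (simp add: row_rank_def_gen)
qed

lemma rank_le_span:
  fixes M :: "'a::field^'n^'m"
  assumes "rows M \<subseteq> vec.span S" "finite S"
  shows "rank M \<le> card S"
  unfolding row_rank_def_gen by (rule vec.dim_le_card[OF assms])

lemma rank_ge4:
  fixes M :: "'a::field^'n^'n"
  assumes as: "\<And>i j. M$i$j = - M$j$i" and dg: "\<And>i. M$i$i = 0"
    and d: "distinct [a,b,c,d]"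
    and pf: "M$a$b*M$c$d - M$a$c*M$b$d + M$a$d*M$b$c \<noteq> 0"
  shows "4 \<le> rank M"
proof -
  have "card {a,b,c,d} \<le> rank M"
  proof (rule rank_ge_family)
    fix lam assume h: "(\<Sum>j\<in>{a,b,c,d}. lam j *s row j M) = 0"
    have e: "lam a * M$a$n + lam b * M$b$n + lam c * M$c$n + lam d * M$d$n = 0" for n
    proof -
      have "(\<Sum>j\<in>{a,b,c,d}. lam j *s row j M) $ n = 0" using h by simp
      then show ?thesis using d by (simp add: sum_component row_def add.assoc)
    qed
    have ea: "lam b * M$b$a + lam c * M$c$a + lam d * M$d$a = 0" using e[of a] dg by simp
    have eb: "lam a * M$a$b + lam c * M$c$b + lam d * M$d$b = 0" using e[of b] dg by simp
    have ec: "lam a * M$a$c + lam b * M$b$c + lam d * M$d$c = 0" using e[of c] dg by simp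
    have ed: "lam a * M$a$d + lam b * M$b$d + lam c * M$c$d = 0" using e[of d] dg by simp
    note ea' = ea[unfolded as[of b a] as[of c a] as[of d a]]
    note eb' = eb[unfolded as[of c b] as[of d b]]
    note ec' = ec[unfolded as[of d c]]
    define P where "P = M$a$b*M$c$d - M$a$c*M$b$d + M$a$d*M$b$c"
    define x where "x = M$a$b"
    define y where "y = M$a$c"
    define z where "z = M$a$d"
    define u where "u = M$b$c"
    define v where "v = M$b$d"
    define w where "w = M$c$d"
    have A: "- lam b * x - lam c * y - lam d * z = 0" using ea' unfolding x_def y_def z_def by simp
    have B: "lam a * x - lam c * u - lam d * v = 0" using eb' unfolding x_def u_def v_def by simp
    have C: "lam a * y + lam b * u - lam d * w = 0" using ec' unfolding y_def u_def w_def by simp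
    have D: "lam a * z + lam b * v + lam c * w = 0" using ed unfolding z_def v_def w_def by simp
    have P: "P = x * w - y * v + z * u" unfolding P_def x_def y_def z_def u_def v_def w_def by simp
    have "P * lam a = w * (lam a * x - lam c * u - lam d * v) - v * (lam a * y + lam b * u - lam d * w) + u * (lam a * z + lam b * v + lam c * w)"
      unfolding P by algebra
    then have 1: "P * lam a = 0" using B C D by simp
    have "P * lam b = - w * (- lam b * x - lam c * y - lam d * z) + z * (lam a * y + lam b * u - lam d * w) - y * (lam a * z + lam b * v + lam c * w)"
      unfolding P by algebra
    then have 2: "P * lam b = 0" using A C D by simp
    have "P * lam c = v * (- lam b * x - lam c * y - lam d * z) - z * (lam a * x - lam c * u - lam d * v) + x * (lam a * z + lam b * v + lam c * w)"
      unfolding P by algebra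
    then have 3: "P * lam c = 0" using A B D by simp
    have "P * lam d = - u * (- lam b * x - lam c * y - lam d * z) + y * (lam a * x - lam c * u - lam d * v) - x * (lam a * y + lam b * u - lam d * w)"
      unfolding P by algebra
    then have 4: "P * lam d = 0" using A B C by simp
    note * = 1 2 3 4
    then show "\<forall>j\<in>{a,b,c,d}. lam j = 0" using * pf by (auto simp: P_def)
  qed
  then show ?thesis using d by simp
qed




lemma sum_antisym_zero:
  fixes f :: "'i::finite \<Rightarrow> 'i \<Rightarrow> 'a::field"
  assumes two: "(2::'a) \<noteq> 0" and as: "\<And>i j. f j i = - f i j"
  shows "(\<Sum>i\<in>UNIV. \<Sum>j\<in>UNIV. f i j) = 0"
proof -
  define S where "S = (\<Sum>i\<in>UNIV. \<Sum>j\<in>UNIV. f i j)"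
  have "S = (\<Sum>j\<in>UNIV. \<Sum>i\<in>UNIV. f i j)" unfolding S_def by (rule sum.swap)
  also have "\<dots> = (\<Sum>j\<in>UNIV. \<Sum>i\<in>UNIV. - f j i)" by (intro sum.cong refl) (rule as)
  also have "\<dots> = - S" unfolding S_def by (simp add: sum_negf)
  finally have "2 * S = 0" by simp
  with two show ?thesis by (simp add: S_def)
qed

lemma cross_self:
  fixes c :: "'a::field^7"
  assumes two: "(2::'a) \<noteq> 0"
  shows "(\<Sum>r\<in>UNIV. \<Sum>s\<in>UNIV. eps r s i * c$r * c$s) = 0"
proof (rule sum_antisym_zero[OF two])
  fix r s
  have "(eps s r i :: 'a) = - eps r s i" by (rule eps_antisym)
  then show "eps s r i * c$s * c$r = - (eps r s i * c$r * c$s)" by simp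
qed

lemma octo_zero_right: "octo_mult x (0,0) = (0,0)"
  by (simp add: octo_mult_def vec_eq_iff)

lemma norm_nonzero:
  fixes c :: "'a::field^7"
  assumes two: "(2::'a) \<noteq> 0" and div: "octo_division TYPE('a)" and c: "c \<noteq> 0"
  shows "(\<Sum>r\<in>UNIV. c$r * c$r) \<noteq> 0"
proof
  assume a: "(\<Sum>r\<in>UNIV. c$r * c$r) = 0"
  have x: "((0::'a), c) \<noteq> (0,0)" using c by simp
  then have inj: "inj (octo_mult (0,c))" using div unfolding octo_division_def
    using bij_is_inj by blast
  have "octo_mult (0,c) (0,c) = (0,0)"
    using a cross_self[OF two, of _ c] by (simp add: octo_mult_def vec_eq_iff)
  also have "\<dots> = octo_mult (0,c) (0,0)" by (simp add: octo_zero_right)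
  finally have "((0::'a),c) = (0,0)" using inj by (simp add: inj_eq)
  with x show False by simp
qed

lemma kernel_div:
  fixes c v :: "'a::field^7"
  assumes two: "(2::'a) \<noteq> 0" and div: "octo_division TYPE('a)" and c: "c \<noteq> 0"
    and cr: "\<And>i. (\<Sum>r\<in>UNIV. \<Sum>s\<in>UNIV. eps r s i * c$r * v$s) = 0"
  shows "\<exists>t. v = t *s c"
proof -
  define a where "a = (\<Sum>r\<in>UNIV. c$r * c$r)"
  define b where "b = (\<Sum>r\<in>UNIV. c$r * v$r)"
  have a0: "a \<noteq> 0" unfolding a_def by (rule norm_nonzero[OF two div c])
  have x: "((0::'a), c) \<noteq> (0,0)" using c by simp
  then have inj: "inj (octo_mult (0,c))" using div unfolding octo_division_def
    using bij_is_inj by blast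
  define z where "z = a *s v - b *s c"
  have "(\<Sum>r\<in>UNIV. c$r * z$r) = (\<Sum>r\<in>UNIV. a * (c$r * v$r) - b * (c$r * c$r))"
    by (rule sum.cong) (simp_all add: z_def algebra_simps)
  also have "\<dots> = a * b - b * a" by (simp add: sum_subtractf sum_distrib_left a_def b_def)
  finally have f: "(\<Sum>r\<in>UNIV. c$r * z$r) = 0" by simp
  have s: "(\<Sum>r\<in>UNIV. \<Sum>s\<in>UNIV. eps r s i * c$r * z$s) = 0" for i
  proof -
    have "(\<Sum>r\<in>UNIV. \<Sum>s\<in>UNIV. eps r s i * c$r * z$s)
       = a * (\<Sum>r\<in>UNIV. \<Sum>s\<in>UNIV. eps r s i * c$r * v$s) - b * (\<Sum>r\<in>UNIV. \<Sum>s\<in>UNIV. eps r s i * c$r * c$s)"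
      by (simp add: z_def right_diff_distrib sum_subtractf sum_distrib_left mult.assoc mult.left_commute)
    also have "\<dots> = 0" using cr[of i] cross_self[OF two, of i c] by simp
    finally show ?thesis .
  qed
  have "octo_mult (0,c) (0,z) = (0,0)"
    using f s by (simp add: octo_mult_def vec_eq_iff)
  also have "\<dots> = octo_mult (0,c) (0,0)" by (simp add: octo_zero_right)
  finally have "((0::'a),z) = (0,0)" using inj by (simp add: inj_eq)
  then have "a *s v = b *s c" by (simp add: z_def)
  then have "v = (b / a) *s c" using a0
    by (simp add: vec_eq_iff field_simps)
  then show ?thesis by blast
qed



lemma Mc_zero: "Mc (0::'a::field^7) = 0"
  by (simp add: Mc_def vec_eq_iff)

lemma rank_ge4_R:
  fixes c :: "'a::field^7"
  assumes two: "(2::'a) \<noteq> 0" and c: "c \<noteq> 0"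
  shows "4 \<le> rank (Mc c)"
proof -
  obtain a b d e where d: "distinct [a,b,d,e]" and
    pf: "Mc c$a$b * Mc c$d$e - Mc c$a$d * Mc c$b$e + Mc c$a$e * Mc c$b$d \<noteq> 0"
    using pf_nonzero[OF two c] by blast
  show ?thesis by (rule rank_ge4[OF Mc_antisym Mc_diag d pf])
qed

lemma div_rank:
  fixes c :: "'a::field^7"
  assumes two: "(2::'a) \<noteq> 0" and div: "octo_division TYPE('a)" and c: "c \<noteq> 0"
  shows "rank (Mc c) = 6"
proof -
  define M where "M = Mc c"
  define H where "H = {u::'a^7. (\<Sum>n\<in>UNIV. c$n * u$n) = 0}"
  have sub: "vec.subspace H"
    unfolding vec.subspace_def H_def
    by (simp add: distrib_left sum.distrib mult.left_commute flip: sum_distrib_left)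
  have rowsH: "rows M \<subseteq> H"
  proof
    fix r assume "r \<in> rows M"
    then obtain m where r: "r = row m M" by (auto simp: rows_def)
    have "(\<Sum>n\<in>UNIV. c$n * r$n) = (\<Sum>n\<in>UNIV. \<Sum>i\<in>UNIV. c$n * (c$i * eps i m n))"
      by (simp add: r row_def M_def Mc_def sum_distrib_left)
    also have "\<dots> = 0"
    proof (rule sum_antisym_zero[OF two])
      fix n i
      have "(eps n m i :: 'a) = eps m i n" by (rule eps_cyc)
      also have "\<dots> = - eps i m n" by (rule eps_antisym)
      finally show "c$i * (c$n * eps n m i) = - (c$n * (c$i * eps i m n))" by simp
    qed
    finally show "r \<in> H" by (simp add: H_def)
  qed
  have cH: "c \<notin> H" using norm_nonzero[OF two div c] by (simp add: H_def)
  have "vec.span (rows M) \<subseteq> H" by (rule vec.span_minimal[OF rowsH sub])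
  then have "vec.span (rows M) \<subset> vec.span UNIV" using cH by auto
  then have "vec.dim (rows M) < vec.dim (UNIV :: ('a^7) set)" by (rule vec.dim_psubset)
  then have "vec.dim (rows M) < CARD(7)" by (simp only: vec_dim_card)
  then have up: "rank M \<le> 6" by (simp add: row_rank_def_gen)
  obtain k where ck: "c$k \<noteq> 0" using c by (auto simp: vec_eq_iff)
  have "card (UNIV - {k} :: 7 set) \<le> rank M"
  proof (rule rank_ge_family)
    fix lam assume hs: "(\<Sum>j\<in>UNIV - {k}. lam j *s row j M) = 0"
    define v :: "'a^7" where "v = (\<chi> j. if j = k then 0 else lam j)"
    have comp: "(\<Sum>j\<in>UNIV - {k}. lam j * M$j$n) = 0" for n
    proof -
      have "(\<Sum>j\<in>UNIV - {k}. lam j *s row j M) $ n = 0" using hs by simp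
      then show ?thesis by (simp add: sum_component row_def)
    qed
    have vM: "(\<Sum>s\<in>UNIV. v$s * M$s$n) = 0" for n
    proof -
      have "(\<Sum>s\<in>UNIV. v$s * M$s$n) = v$k * M$k$n + (\<Sum>s\<in>UNIV - {k}. v$s * M$s$n)"
        by (rule sum.remove) simp_all
      also have "\<dots> = (\<Sum>s\<in>UNIV - {k}. lam s * M$s$n)"
        by (simp add: v_def)
      finally show ?thesis using comp by simp
    qed
    have cr: "(\<Sum>r\<in>UNIV. \<Sum>s\<in>UNIV. eps r s i * c$r * v$s) = 0" for i
    proof -
      have "(\<Sum>r\<in>UNIV. \<Sum>s\<in>UNIV. eps r s i * c$r * v$s) = (\<Sum>s\<in>UNIV. \<Sum>r\<in>UNIV. v$s * (c$r * eps r s i))"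
        by (subst sum.swap) (simp add: ac_simps)
      also have "\<dots> = (\<Sum>s\<in>UNIV. v$s * M$s$i)"
        by (simp add: M_def Mc_def sum_distrib_left)
      finally show ?thesis using vM by simp
    qed
    obtain t where vt: "v = t *s c" using kernel_div[OF two div c cr] by blast
    have "v$k = 0" by (simp add: v_def)
    then have "t * c$k = 0" using vt by simp
    then have "t = 0" using ck by simp
    then have "v = 0" using vt by simp
    then have "\<forall>i. (if i = k then 0 else lam i) = 0" by (simp add: v_def vec_eq_iff)
    then show "\<forall>j\<in>UNIV - {k}. lam j = 0" by (metis DiffE singletonI)
  qed
  moreover have "card (UNIV - {k} :: 7 set) = 6" by simp
  ultimately have "6 \<le> rank M" by simp
  with up show ?thesis by (simp add: M_def)
qed

lemma W_rank: "rank (W_map_matrix :: 'a::field^(7\<times>7)^7) = 7"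
proof -
  let ?W = "W_map_matrix :: 'a::field^(7\<times>7)^7"
  have "card (UNIV :: 7 set) \<le> rank ?W"
  proof (rule rank_ge_family)
    fix lam :: "7 \<Rightarrow> 'a" assume hs: "(\<Sum>j\<in>UNIV. lam j *s row j ?W) = 0"
    have comp: "(\<Sum>j\<in>UNIV. lam j * eps j (fst p) (snd p)) = 0" for p
    proof -
      have "(\<Sum>j\<in>UNIV. lam j *s row j ?W) $ p = 0" using hs by simp
      then show ?thesis by (simp add: sum_component row_def W_map_matrix_def)
    qed
    have "lam 1 = 0" using comp[of "(2,3)"] by (simp add: sum7 eps_simps)
    moreover have "lam 2 = 0" using comp[of "(3,1)"] by (simp add: sum7 eps_simps)
    moreover have "lam 3 = 0" using comp[of "(1,2)"] by (simp add: sum7 eps_simps)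
    moreover have "lam 4 = 0" using comp[of "(5,1)"] by (simp add: sum7 eps_simps)
    moreover have "lam 5 = 0" using comp[of "(1,4)"] by (simp add: sum7 eps_simps)
    moreover have "lam 6 = 0" using comp[of "(7,1)"] by (simp add: sum7 eps_simps)
    moreover have "lam 7 = 0" using comp[of "(1,6)"] by (simp add: sum7 eps_simps)
    ultimately have "lam j = 0" for j using exhaust_7[of j] by (elim disjE) simp_all
    then show "\<forall>j\<in>UNIV. lam j = 0" by simp
  qed
  moreover have "rank ?W \<le> card (range (\<lambda>i. row i ?W))"
    by (rule rank_le_span) (auto simp: rows_def intro: vec.span_base)
  moreover have "card (range (\<lambda>i. row i ?W)) \<le> card (UNIV :: 7 set)"
    by (rule card_image_le) simp
  moreover have "card (UNIV :: 7 set) = 7" by simp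
  ultimately show ?thesis by linarith
qed



lemma example_rank4:
  assumes two: "(2::'b::alg_closed_field) \<noteq> 0"
  shows "\<exists>M::'b^7^7. M \<in> R_space \<and> M \<noteq> 0 \<and> rank M = 4"
proof -
  obtain x :: 'b where x: "(\<Sum>k\<le>2. (if k = 1 then 0 else 1) * x ^ k) = 0"
    using alg_closed[of 2 "\<lambda>k. if k = 1 then (0::'b) else 1"] by auto
  have ii: "x * x = -1"
  proof -
    have "1 + x * x = 0" using x by (simp add: eval_nat_numeral power2_eq_square)
    then show ?thesis by (simp add: eq_neg_iff_add_eq_0 add.commute)
  qed
  define c :: "'b^7" where "c = (\<chi> i. if i = 1 then 1 else if i = 2 then x else 0)"
  have cv: "c$1 = 1" "c$2 = x" "c$3 = 0" "c$4 = 0" "c$5 = 0" "c$6 = 0" "c$7 = 0"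
    by (simp_all add: c_def)
  define M where "M = Mc c"
  have MR: "M \<in> R_space" by (auto simp: R_space_iff M_def)
  have M23: "M$2$3 = 1" by (simp add: M_def Mc_ents cv)
  then have M0: "M \<noteq> 0" by auto
  have c0: "c \<noteq> 0" using cv(1) by auto
  have lo: "4 \<le> rank M" unfolding M_def by (rule rank_ge4_R[OF two c0])
  have r1: "row 1 M = (- x) *s row 2 M"
  proof -
    have "M$1$n = - x * M$2$n" for n
      using exhaust_7[of n] by (elim disjE) (simp_all add: M_def Mc_ents Mc_diag cv)
    then show ?thesis by (simp add: vec_eq_iff row_def)
  qed
  have r6: "row 6 M = x *s row 5 M"
  proof -
    have "M$6$n = x * M$5$n" for n
      using exhaust_7[of n] by (elim disjE) (simp_all add: M_def Mc_ents Mc_diag cv ii)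
    then show ?thesis by (simp add: vec_eq_iff row_def)
  qed
  have r7: "row 7 M = x *s row 4 M"
  proof -
    have "M$7$n = x * M$4$n" for n
      using exhaust_7[of n] by (elim disjE) (simp_all add: M_def Mc_ents Mc_diag cv ii)
    then show ?thesis by (simp add: vec_eq_iff row_def)
  qed
  define S where "S = {row 2 M, row 3 M, row 4 M, row 5 M}"
  have rs: "rows M \<subseteq> vec.span S"
  proof
    fix r assume "r \<in> rows M"
    then obtain m where r: "r = row m M" by (auto simp: rows_def)
    have b2: "row 2 M \<in> vec.span S" "row 3 M \<in> vec.span S" "row 4 M \<in> vec.span S"
      "row 5 M \<in> vec.span S" by (auto simp: S_def intro: vec.span_base)
    show "r \<in> vec.span S"
      using exhaust_7[of m]
    proof (elim disjE)
      assume "m = 1" then show ?thesis using r r1 b2 by (simp add: vec.span_scale vec.span_neg)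
    next
      assume "m = 2" then show ?thesis using r b2 by simp
    next
      assume "m = 3" then show ?thesis using r b2 by simp
    next
      assume "m = 4" then show ?thesis using r b2 by simp
    next
      assume "m = 5" then show ?thesis using r b2 by simp
    next
      assume "m = 6" then show ?thesis using r r6 b2 by (simp add: vec.span_scale)
    next
      assume "m = 7" then show ?thesis using r r7 b2 by (simp add: vec.span_scale)
    qed
  qed
  have "rank M \<le> card S" by (rule rank_le_span[OF rs]) (simp add: S_def)
  also have "card S \<le> 4"
    using card_length[of "[row 2 M, row 3 M, row 4 M, row 5 M]"] by (simp add: S_def)
  finally have "rank M \<le> 4" .
  with lo MR M0 show ?thesis by auto
qed

theorem lemma11p1:
  assumes "(2::'a::field) \<noteq> 0"
  shows "rank (W_map_matrix :: 'a^(7\<times>7)^7) = 7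
    \<and> (octo_division TYPE('a) \<longrightarrow>
         (\<forall>M::'a^7^7. M \<in> R_space \<and> M \<noteq> 0 \<longrightarrow> rank M = 6))
    \<and> ((2::'b::alg_closed_field) \<noteq> 0 \<longrightarrow>
         (\<forall>M::'b^7^7. M \<in> R_space \<and> M \<noteq> 0 \<longrightarrow> rank M \<ge> 4)
         \<and> (\<exists>M::'b^7^7. M \<in> R_space \<and> M \<noteq> 0 \<and> rank M = 4))"
proof (intro conjI impI allI)
  show "rank (W_map_matrix :: 'a^(7\<times>7)^7) = 7" by (rule W_rank)
next
  fix M :: "'a^7^7"
  assume div: "octo_division TYPE('a)" and M: "M \<in> R_space \<and> M \<noteq> 0"
  then obtain c where Mc: "M = Mc c" by (auto simp: R_space_iff)
  have "c \<noteq> 0" using M Mc Mc_zero by auto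
  then show "rank M = 6" unfolding Mc by (rule div_rank[OF assms div])
next
  fix M :: "'b^7^7"
  assume two: "(2::'b) \<noteq> 0" and M: "M \<in> R_space \<and> M \<noteq> 0"
  then obtain c where Mc: "M = Mc c" by (auto simp: R_space_iff)
  have "c \<noteq> 0" using M Mc Mc_zero by auto
  then show "4 \<le> rank M" unfolding Mc by (rule rank_ge4_R[OF two])
next
  assume two: "(2::'b) \<noteq> 0"
  show "\<exists>M::'b^7^7. M \<in> R_space \<and> M \<noteq> 0 \<and> rank M = 4" by (rule example_rank4[OF two])
qed

end
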